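(* For a set $\mathcal{R}$ of languages over $\Sigma$ and a regular language $R\subseteq\Sigma^*$ let $\mathcal{R}\,\dot-\,R=\{L\setminus R\mid L\in\mathcal{R}\}$. (1) There exist a rational set of regular languages $\mathcal{R}$ and a regular $R$ such that $\mathcal{R}\,\dot-\,R$ is not a rational set of regular languages. (2) If $\mathcal{R}$ is a finite rational set of regular languages and $R$ is regular, then $\mathcal{R}\,\dot-\,R$ is a finite rational set of regular languages. (3) In the latter case a different language substitution is in general required: there exist an alphabet $\Delta$, a regular language substitution $\varphi:\Delta\to2^{\Sigma^*}$, a regular $K\subseteq\Delta^+$ with $\mathcal{R}=(K,\varphi)$ finite, and a regular $R\subseteq\Sigma^*$ such that there is no regular $K'\subseteq\Delta^+$ with $\mathcal{R}\,\dot-\,R=(K',\varphi)$.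
   Context: Alphabets are nonempty finite sets. A regular language substitution $\varphi:\Delta\to2^{\Sigma^*}$ maps each symbol to a regular language over $\Sigma$, extended by $\varphi(\delta w)=\varphi(\delta)\varphi(w)$. A set $\mathcal{R}$ of regular languages over $\Sigma$ is a rational set of regular languages, written $\mathcal{R}=(K,\varphi)$, if there are an alphabet $\Delta$, a regular $K\subseteq\Delta^+$ and a regular language substitution $\varphi$ with $\mathcal{R}=\{\varphi(w)\mid w\in K\}$. *)

theory Defs
  imports Main
begin

definition alphabet :: "'a set \<Rightarrow> bool" where
  "alphabet A \<longleftrightarrow> finite A \<and> A \<noteq> {}"

definition conc :: "'a list set \<Rightarrow> 'a list set \<Rightarrow> 'a list set" where
  "conc A B = {u @ v | u v. u \<in> A \<and> v \<in> B}"

inductive_set star :: "'a list set \<Rightarrow> 'a list set" for A where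
  star_Nil: "[] \<in> star A"
| star_app: "u \<in> A \<Longrightarrow> v \<in> star A \<Longrightarrow> u @ v \<in> star A"

inductive regular :: "'a set \<Rightarrow> 'a list set \<Rightarrow> bool" for S where
  reg_empty: "regular S {}"
| reg_eps: "regular S {[]}"
| reg_letter: "a \<in> S \<Longrightarrow> regular S {[a]}"
| reg_union: "regular S A \<Longrightarrow> regular S B \<Longrightarrow> regular S (A \<union> B)"
| reg_conc: "regular S A \<Longrightarrow> regular S B \<Longrightarrow> regular S (conc A B)"
| reg_star: "regular S A \<Longrightarrow> regular S (star A)"

definition plus_words :: "'a set \<Rightarrow> 'a list set" where
  "plus_words D = lists D - {[]}"

definition reg_subst :: "'d set \<Rightarrow> 'a set \<Rightarrow> ('d \<Rightarrow> 'a list set) \<Rightarrow> bool" where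
  "reg_subst D S phi \<longleftrightarrow> (\<forall>d\<in>D. regular S (phi d))"

fun subst_word :: "('d \<Rightarrow> 'a list set) \<Rightarrow> 'd list \<Rightarrow> 'a list set" where
  "subst_word phi [] = {[]}"
| "subst_word phi (d # w) = conc (phi d) (subst_word phi w)"

definition rat_of :: "'d list set \<Rightarrow> ('d \<Rightarrow> 'a list set) \<Rightarrow> 'a list set set" where
  "rat_of K phi = subst_word phi ` K"

text \<open>Rational set of regular languages over S.  The auxiliary alphabet D ranges
  over finite nonempty sets of natural numbers (every finite alphabet can be
  renamed into nat).\<close>
definition rational_set :: "'a set \<Rightarrow> 'a list set set \<Rightarrow> bool" where
  "rational_set S R \<longleftrightarrow>
     (\<exists>(D::nat set) K phi. alphabet D \<and> K \<subseteq> plus_words D \<and> regular D K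
        \<and> reg_subst D S phi \<and> R = rat_of K phi)"

definition dminus :: "'a list set set \<Rightarrow> 'a list set \<Rightarrow> 'a list set set" where
  "dminus R L = (\<lambda>L'. L' - L) ` R"

end

theory Submission imports Defs begin

definition deriv :: "'a list \<Rightarrow> 'a list set \<Rightarrow> 'a list set" where
  "deriv u L = {v. u @ v \<in> L}"

lemma deriv_append: "deriv (u @ v) L = deriv v (deriv u L)"
  by (simp add: deriv_def)

lemma deriv_Nil[simp]: "deriv [] L = L"
  by (simp add: deriv_def)

lemma star_append: "u \<in> star A \<Longrightarrow> v \<in> star A \<Longrightarrow> u @ v \<in> star A"
  by (induction rule: star.induct) (auto intro: star.intros)

lemma regular_lists: "regular S L \<Longrightarrow> L \<subseteq> lists S"
proof (induction rule: regular.induct)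
  case (reg_star A)
  show ?case
  proof
    fix w assume "w \<in> star A" then show "w \<in> lists S"
      by (induction rule: star.induct) (use reg_star in auto)
  qed
next
  case (reg_conc A B) then show ?case by (force simp: conc_def)
qed auto

lemma regular_Union: "finite I \<Longrightarrow> (\<And>i. i \<in> I \<Longrightarrow> regular S (F i)) \<Longrightarrow> regular S (\<Union> (F ` I))"
  by (induction rule: finite_induct) (auto intro: regular.intros)

lemma deriv_conc: "deriv u (conc A B) = conc (deriv u A) B \<union> \<Union> {deriv v B | v. \<exists>w. u = w @ v \<and> w \<in> A}"
proof (intro equalityI subsetI)
  fix z assume "z \<in> deriv u (conc A B)"
  then obtain x y where xy: "u @ z = x @ y" "x \<in> A" "y \<in> B" by (auto simp: deriv_def conc_def)
  from xy(1) obtain us where "(u = x @ us \<and> us @ z = y) \<or> (u @ us = x \<and> z = us @ y)"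
    by (auto simp: append_eq_append_conv2)
  then show "z \<in> conc (deriv u A) B \<union> \<Union> {deriv v B | v. \<exists>w. u = w @ v \<and> w \<in> A}"
  proof
    assume "u = x @ us \<and> us @ z = y"
    then have "z \<in> deriv us B" "\<exists>w. u = w @ us \<and> w \<in> A" using xy by (auto simp: deriv_def)
    then show ?thesis by blast
  next
    assume "u @ us = x \<and> z = us @ y"
    then have "us \<in> deriv u A" "z = us @ y" using xy by (auto simp: deriv_def)
    then show ?thesis using xy(3) unfolding conc_def by blast
  qed
next
  fix z assume "z \<in> conc (deriv u A) B \<union> \<Union> {deriv v B | v. \<exists>w. u = w @ v \<and> w \<in> A}"
  then show "z \<in> deriv u (conc A B)"
  proof
    assume "z \<in> conc (deriv u A) B"
    then obtain s t where "z = s @ t" "u @ s \<in> A" "t \<in> B" by (auto simp: conc_def deriv_def)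
    then have "u @ z = (u @ s) @ t" by simp
    then show ?thesis using \<open>u @ s \<in> A\<close> \<open>t \<in> B\<close> unfolding deriv_def conc_def by blast
  next
    assume "z \<in> \<Union> {deriv v B | v. \<exists>w. u = w @ v \<and> w \<in> A}"
    then obtain v w where "v @ z \<in> B" "u = w @ v" "w \<in> A" by (auto simp: deriv_def)
    then have "u @ z = w @ (v @ z)" by simp
    then show ?thesis using \<open>v @ z \<in> B\<close> \<open>w \<in> A\<close> unfolding deriv_def conc_def by blast
  qed
qed

lemma star_deriv_aux: "x \<in> star A \<Longrightarrow> x = u @ z \<Longrightarrow> u \<noteq> [] \<Longrightarrow>
   \<exists>w v. u = w @ v \<and> w \<in> star A \<and> v \<noteq> [] \<and> z \<in> conc (deriv v A) (star A)"
proof (induction arbitrary: u z rule: star.induct)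
  case star_Nil then show ?case by simp
next
  case (star_app x y)
  show ?case
  proof (cases "length u \<le> length x")
    case True
    then obtain t where "x = u @ t" "z = t @ y" using star_app.prems
      by (metis append_eq_append_conv_if append_take_drop_id)
    then have "z \<in> conc (deriv u A) (star A)" using star_app.hyps
      by (auto simp: conc_def deriv_def)
    then show ?thesis using star_app.prems star.star_Nil[of A]
      by (intro exI[of _ "[]"] exI[of _ u]) auto
  next
    case False
    have xy: "x = take (length x) u" "y = drop (length x) u @ z" using star_app.prems False
      by (auto simp: append_eq_append_conv_if)
    define u' where "u' = drop (length x) u"
    have u': "u = x @ u'" "y = u' @ z" "u' \<noteq> []" using xy False unfolding u'_def
      by (metis append_take_drop_id, simp, simp)
    from star_app.IH[OF u'(2,3)] obtain w v where "u' = w @ v" "w \<in> star A" "v \<noteq> []" "z \<in> conc (deriv v A) (star A)"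
      by blast
    then show ?thesis using u' star_app.hyps
      by (intro exI[of _ "x @ w"] exI[of _ v]) (auto intro: star.star_app)
  qed
qed

lemma deriv_star: assumes "u \<noteq> []" shows "deriv u (star A) = \<Union> {conc (deriv v A) (star A) | v. \<exists>w. u = w @ v \<and> w \<in> star A \<and> v \<noteq> []}"
  (is "?L = ?R")
proof
  show "?L \<subseteq> ?R"
  proof
    fix z assume "z \<in> deriv u (star A)"
    then have "u @ z \<in> star A" by (simp add: deriv_def)
    from star_deriv_aux[OF this refl \<open>u \<noteq> []\<close>] show "z \<in> \<Union> {conc (deriv v A) (star A) | v. \<exists>w. u = w @ v \<and> w \<in> star A \<and> v \<noteq> []}"
      by blast
  qed
next
  show "\<Union> {conc (deriv v A) (star A) | v. \<exists>w. u = w @ v \<and> w \<in> star A \<and> v \<noteq> []} \<subseteq> deriv u (star A)"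
  proof
    fix z assume "z \<in> \<Union> {conc (deriv v A) (star A) | v. \<exists>w. u = w @ v \<and> w \<in> star A \<and> v \<noteq> []}"
    then obtain v w z1 z2 where "u = w @ v" "w \<in> star A" "v @ z1 \<in> A" "z2 \<in> star A" "z = z1 @ z2"
      by (auto simp: conc_def deriv_def)
    then have "w @ ((v @ z1) @ z2) \<in> star A" by (intro star_append star.star_app)
    then show "z \<in> deriv u (star A)" using \<open>u = w @ v\<close> \<open>z = z1 @ z2\<close> by (simp add: deriv_def)
  qed
qed

lemma deriv_empty: "deriv u {} = {}" by (simp add: deriv_def)
lemma deriv_eps: "deriv u {[]} = (if u = [] then {[]} else {})" by (auto simp: deriv_def)
lemma deriv_letter: "deriv u {[a]} = (if u = [] then {[a]} else if u = [a] then {[]} else {})"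
  by (cases u) (auto simp: deriv_def)
lemma deriv_union: "deriv u (A \<union> B) = deriv u A \<union> deriv u B" by (auto simp: deriv_def)

lemma regular_finite_derivs: "regular S L \<Longrightarrow> finite (range (\<lambda>u. deriv u L))"
proof (induction rule: regular.induct)
  case reg_empty
  have "range (\<lambda>u. deriv u ({}::'a list set)) \<subseteq> {{}}" by (auto simp: deriv_empty)
  then show ?case using finite_subset by blast
next
  case reg_eps
  have "range (\<lambda>u. deriv u {[]::'a list}) \<subseteq> {{[]}, {}}" by (auto simp: deriv_eps)
  then show ?case using finite_subset by blast
next
  case (reg_letter a)
  have "range (\<lambda>u. deriv u {[a]}) \<subseteq> {{[a]}, {[]}, {}}"
    by (auto simp: deriv_letter)
  then show ?case using finite_subset by blast
next
  case (reg_union A B)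
  have "range (\<lambda>u. deriv u (A \<union> B)) \<subseteq> (\<lambda>(X,Y). X \<union> Y) ` (range (\<lambda>u. deriv u A) \<times> range (\<lambda>u. deriv u B))"
  proof
    fix Z assume "Z \<in> range (\<lambda>u. deriv u (A \<union> B))"
    then obtain u where "Z = deriv u (A \<union> B)" by blast
    then show "Z \<in> (\<lambda>(X,Y). X \<union> Y) ` (range (\<lambda>u. deriv u A) \<times> range (\<lambda>u. deriv u B))"
      unfolding deriv_union by (intro image_eqI[of _ _ "(deriv u A, deriv u B)"]) auto
  qed
  then show ?case by (rule finite_subset) (use reg_union.IH in simp_all)
next
  case (reg_conc A B)
  have "range (\<lambda>u. deriv u (conc A B)) \<subseteq> (\<lambda>(X,T). conc X B \<union> \<Union>T) ` (range (\<lambda>u. deriv u A) \<times> Pow (range (\<lambda>u. deriv u B)))"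
  proof
    fix Z assume "Z \<in> range (\<lambda>u. deriv u (conc A B))"
    then obtain u where "Z = deriv u (conc A B)" by blast
    moreover have "{deriv v B | v. \<exists>w. u = w @ v \<and> w \<in> A} \<in> Pow (range (\<lambda>u. deriv u B))" by blast
    ultimately show "Z \<in> (\<lambda>(X,T). conc X B \<union> \<Union>T) ` (range (\<lambda>u. deriv u A) \<times> Pow (range (\<lambda>u. deriv u B)))"
      unfolding deriv_conc
      by (intro image_eqI[of _ _ "(deriv u A, {deriv v B | v. \<exists>w. u = w @ v \<and> w \<in> A})"]) simp_all
  qed
  then show ?case by (rule finite_subset) (use reg_conc.IH in simp_all)
next
  case (reg_star A)
  have "range (\<lambda>u. deriv u (star A)) \<subseteq> insert (star A) ((\<lambda>T. \<Union> ((\<lambda>X. conc X (star A)) ` T)) ` Pow (range (\<lambda>u. deriv u A)))"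
  proof
    fix Z assume "Z \<in> range (\<lambda>u. deriv u (star A))"
    then obtain u where Z: "Z = deriv u (star A)" by blast
    show "Z \<in> insert (star A) ((\<lambda>T. \<Union> ((\<lambda>X. conc X (star A)) ` T)) ` Pow (range (\<lambda>u. deriv u A)))"
    proof (cases "u = []")
      case True then show ?thesis using Z by simp
    next
      case False
      let ?T = "{deriv v A | v. \<exists>w. u = w @ v \<and> w \<in> star A \<and> v \<noteq> []}"
      have "Z = \<Union> ((\<lambda>X. conc X (star A)) ` ?T)"
        unfolding Z deriv_star[OF False] by blast
      moreover have "?T \<in> Pow (range (\<lambda>u. deriv u A))" by blast
      ultimately show ?thesis by blast
    qed
  qed
  then show ?case by (rule finite_subset) (use reg_star.IH in simp_all)
qed


definition path :: "'a set \<Rightarrow> 'a list set set \<Rightarrow> 'a list set \<Rightarrow> 'a list set \<Rightarrow> 'a list set" where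
  "path S X p q = {w \<in> lists S. deriv w p = q \<and> (\<forall>i. 0 < i \<and> i < length w \<longrightarrow> deriv (take i w) p \<in> X)}"

lemma path_mono: "X \<subseteq> Y \<Longrightarrow> path S X p q \<subseteq> path S Y p q"
  by (auto simp: path_def)

lemma path_Nil: "[] \<in> path S X p p"
  by (simp add: path_def)

lemma path_append:
  assumes u: "u \<in> path S Y p m" and v: "v \<in> path S Y m q" and m: "m \<in> Y"
  shows "u @ v \<in> path S Y p q"
proof -
  have du: "deriv u p = m" using u by (simp add: path_def)
  have "u @ v \<in> lists S" using u v by (simp add: path_def)
  moreover have "deriv (u @ v) p = q" using du v by (simp add: path_def deriv_append)
  moreover have "deriv (take i (u @ v)) p \<in> Y" if i: "0 < i" "i < length (u @ v)" for i
  proof (cases "i < length u")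
    case True then show ?thesis using u i by (simp add: path_def)
  next
    case False
    show ?thesis
    proof (cases "i = length u")
      case True then show ?thesis using du m by simp
    next
      case False
      then have "take i (u @ v) = u @ take (i - length u) v" "0 < i - length u" "i - length u < length v"
        using \<open>\<not> i < length u\<close> i by auto
      then show ?thesis using v du by (simp add: path_def deriv_append)
    qed
  qed
  ultimately show ?thesis by (simp add: path_def)
qed

lemma star_path: "w \<in> star (path S Y x x) \<Longrightarrow> x \<in> Y \<Longrightarrow> w \<in> path S Y x x"
  by (induction rule: star.induct) (auto intro: path_Nil path_append)

lemma first_visit:
  assumes w: "w \<in> path S (insert x X) p q" and nw: "w \<notin> path S X p q"
  shows "\<exists>i. 0 < i \<and> i < length w \<and> take i w \<in> path S X p x \<and> drop i w \<in> path S (insert x X) x q"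
proof -
  have wl: "w \<in> lists S" and dw: "deriv w p = q"
    and wi: "\<And>i. 0 < i \<Longrightarrow> i < length w \<Longrightarrow> deriv (take i w) p \<in> insert x X"
    using w by (auto simp: path_def)
  let ?P = "\<lambda>i. 0 < i \<and> i < length w \<and> deriv (take i w) p \<notin> X"
  have ex: "\<exists>i. ?P i" using nw wl dw by (auto simp: path_def)
  define i where "i = (LEAST i. ?P i)"
  have Pi: "?P i" unfolding i_def by (rule LeastI_ex[OF ex])
  have min: "\<And>j. j < i \<Longrightarrow> \<not> ?P j" unfolding i_def by (rule not_less_Least)
  have dx: "deriv (take i w) p = x" using Pi wi[of i] by simp
  have "take i w \<in> path S X p x"
    unfolding path_def
  proof (intro CollectI conjI allI impI)
    show "take i w \<in> lists S" using wl set_take_subset[of i w] by (simp add: lists_eq_set)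
    show "deriv (take i w) p = x" by (rule dx)
    fix j assume "0 < j \<and> j < length (take i w)"
    then have j: "0 < j" "j < i" "j < length w" by auto
    have "\<not> ?P j" by (rule min) (rule j(2))
    then show "deriv (take j (take i w)) p \<in> X" using j by (simp add: min_def)
  qed
  moreover have "drop i w \<in> path S (insert x X) x q"
    unfolding path_def
  proof (intro CollectI conjI allI impI)
    show "drop i w \<in> lists S" using wl set_drop_subset[of i w] by (simp add: lists_eq_set)
    show "deriv (drop i w) x = q" using dw dx by (metis append_take_drop_id deriv_append)
    fix j assume j: "0 < j \<and> j < length (drop i w)"
    have "deriv (take j (drop i w)) x = deriv (take (i + j) w) p"
      using dx by (simp add: take_add deriv_append)
    moreover have "0 < i + j" "i + j < length w" using j Pi by auto
    ultimately show "deriv (take j (drop i w)) x \<in> insert x X" using wi[of "i + j"] by simp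
  qed
  ultimately show ?thesis using Pi by blast
qed

lemma loop_decomp:
  "r \<in> path S (insert x X) x q \<Longrightarrow> r \<in> conc (star (path S X x x)) (path S X x q)"
proof (induction "length r" arbitrary: r rule: less_induct)
  case less
  show ?case
  proof (cases "r \<in> path S X x q")
    case True
    then show ?thesis unfolding conc_def using star.star_Nil by fastforce
  next
    case False
    from first_visit[OF less.prems False] obtain i where
      i: "0 < i" "i < length r" "take i r \<in> path S X x x" "drop i r \<in> path S (insert x X) x q"
      by blast
    have "drop i r \<in> conc (star (path S X x x)) (path S X x q)"
      using less.hyps[of "drop i r"] i by simp
    then obtain s t where st: "drop i r = s @ t" "s \<in> star (path S X x x)" "t \<in> path S X x q"
      by (auto simp: conc_def)
    have "take i r @ s \<in> star (path S X x x)" using st i by (intro star.star_app)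
    moreover have "r = (take i r @ s) @ t" using st by (metis append_assoc append_take_drop_id)
    ultimately show ?thesis using st unfolding conc_def by blast
  qed
qed

lemma path_insert:
  assumes "x \<notin> X"
  shows "path S (insert x X) p q = path S X p q \<union> conc (path S X p x) (conc (star (path S X x x)) (path S X x q))"
proof
  show "path S (insert x X) p q \<subseteq> path S X p q \<union> conc (path S X p x) (conc (star (path S X x x)) (path S X x q))"
  proof
    fix w assume w: "w \<in> path S (insert x X) p q"
    show "w \<in> path S X p q \<union> conc (path S X p x) (conc (star (path S X x x)) (path S X x q))"
    proof (cases "w \<in> path S X p q")
      case False
      from first_visit[OF w False] obtain i where
        i: "take i w \<in> path S X p x" "drop i w \<in> path S (insert x X) x q" by blast
      have "drop i w \<in> conc (star (path S X x x)) (path S X x q)" by (rule loop_decomp[OF i(2)])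
      then have "take i w @ drop i w \<in> conc (path S X p x) (conc (star (path S X x x)) (path S X x q))"
        using i(1) unfolding conc_def by blast
      then show ?thesis by simp
    qed simp
  qed
next
  have sub: "path S X a b \<subseteq> path S (insert x X) a b" for a b by (rule path_mono) blast
  show "path S X p q \<union> conc (path S X p x) (conc (star (path S X x x)) (path S X x q)) \<subseteq> path S (insert x X) p q"
  proof (intro Un_least subsetI)
    fix w assume "w \<in> conc (path S X p x) (conc (star (path S X x x)) (path S X x q))"
    then obtain u s t where w: "w = u @ s @ t" "u \<in> path S X p x" "s \<in> star (path S X x x)" "t \<in> path S X x q"
      by (auto simp: conc_def)
    have "s \<in> star (path S (insert x X) x x)"
      using w(3) by (induction rule: star.induct) (use sub in \<open>auto intro: star.intros\<close>)
    then have s: "s \<in> path S (insert x X) x x" by (rule star_path) simp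
    show "w \<in> path S (insert x X) p q" unfolding w(1)
      by (rule path_append[OF _ path_append[OF s _]]) (use w sub in auto)
  qed (use sub in auto)
qed

lemma path_empty:
  "path S {} p q = (if p = q then {[]} else {}) \<union> \<Union> ((\<lambda>a. {[a]}) ` {a \<in> S. deriv [a] p = q})"
proof (intro equalityI subsetI)
  fix w assume w: "w \<in> path S {} p q"
  have wl: "w \<in> lists S" and dw: "deriv w p = q" using w by (simp_all add: path_def)
  have "length w \<le> 1"
  proof (rule ccontr)
    assume l: "\<not> length w \<le> 1"
    from w have "\<forall>i. 0 < i \<and> i < length w \<longrightarrow> deriv (take i w) p \<in> {}" unfolding path_def by blast
    then have "0 < (1::nat) \<and> 1 < length w \<longrightarrow> deriv (take 1 w) p \<in> {}" by (rule spec)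
    with l show False by simp
  qed
  then consider "w = []" | a where "w = [a]" by (cases w) auto
  then show "w \<in> (if p = q then {[]} else {}) \<union> \<Union> ((\<lambda>a. {[a]}) ` {a \<in> S. deriv [a] p = q})"
  proof cases
    case 1 then show ?thesis using dw by simp
  next
    case (2 a)
    then have "a \<in> {a \<in> S. deriv [a] p = q}" using wl dw by simp
    then show ?thesis using 2 by blast
  qed
next
  fix w assume "w \<in> (if p = q then {[]} else {}) \<union> \<Union> ((\<lambda>a. {[a]}) ` {a \<in> S. deriv [a] p = q})"
  then consider "p = q" "w = []" | a where "a \<in> S" "deriv [a] p = q" "w = [a]"
    by (cases "p = q") auto
  then show "w \<in> path S {} p q"
  proof cases
    case 1 then show ?thesis by (simp add: path_def)
  next
    case 2 then show ?thesis unfolding path_def by auto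
  qed
qed

lemma path_regular:
  assumes S: "finite S" and X: "finite X"
  shows "regular S (path S X p q)"
  using X
proof (induction arbitrary: p q rule: finite_induct)
  case empty
  have U: "regular S (\<Union> ((\<lambda>a. {[a]}) ` {a \<in> S. deriv [a] p = q}))"
    using S by (intro regular_Union) (auto intro: regular.intros)
  have E: "regular S (if p = q then {[]} else {})" by (simp add: regular.intros)
  show ?case unfolding path_empty by (rule regular.reg_union[OF E U])
next
  case (insert x X)
  then show ?case unfolding path_insert[OF insert(2)] by (intro regular.intros insert.IH)
qed

lemma finite_derivs_regular:
  assumes S: "finite S" and L: "L \<subseteq> lists S" and fin: "finite (range (\<lambda>u. deriv u L))"
  shows "regular S L"
proof -
  let ?Q = "range (\<lambda>u. deriv u L)"
  have "L = \<Union> ((\<lambda>q. path S ?Q L q) ` {q \<in> ?Q. [] \<in> q})"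
  proof (intro equalityI subsetI)
    fix w assume w: "w \<in> L"
    have "w \<in> path S ?Q L (deriv w L)" using w L unfolding path_def by blast
    moreover have "deriv w L \<in> {q \<in> ?Q. [] \<in> q}" using w by (simp add: deriv_def)
    ultimately show "w \<in> \<Union> ((\<lambda>q. path S ?Q L q) ` {q \<in> ?Q. [] \<in> q})" by blast
  next
    fix w assume "w \<in> \<Union> ((\<lambda>q. path S ?Q L q) ` {q \<in> ?Q. [] \<in> q})"
    then obtain q where "w \<in> path S ?Q L q" "[] \<in> q" by blast
    then have "[] \<in> deriv w L" unfolding path_def by blast
    then show "w \<in> L" by (simp add: deriv_def)
  qed
  also have "regular S \<dots>" using fin S by (intro regular_Union path_regular) auto
  finally show ?thesis .
qed

lemma deriv_diff: "deriv u (A - B) = deriv u A - deriv u B" by (auto simp: deriv_def)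

lemma regular_diff:
  assumes S: "finite S" and A: "regular S A" and B: "regular S B"
  shows "regular S (A - B)"
proof (rule finite_derivs_regular[OF S])
  show "A - B \<subseteq> lists S" using regular_lists[OF A] by blast
  have "range (\<lambda>u. deriv u (A - B)) \<subseteq> (\<lambda>(X,Y). X - Y) ` (range (\<lambda>u. deriv u A) \<times> range (\<lambda>u. deriv u B))"
  proof
    fix Z assume "Z \<in> range (\<lambda>u. deriv u (A - B))"
    then obtain u where "Z = deriv u (A - B)" by blast
    then show "Z \<in> (\<lambda>(X,Y). X - Y) ` (range (\<lambda>u. deriv u A) \<times> range (\<lambda>u. deriv u B))"
      unfolding deriv_diff by (intro image_eqI[of _ _ "(deriv u A, deriv u B)"]) auto
  qed
  then show "finite (range (\<lambda>u. deriv u (A - B)))"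
    by (rule finite_subset) (use regular_finite_derivs[OF A] regular_finite_derivs[OF B] in simp)
qed


lemma subst_word_regular: "reg_subst D S phi \<Longrightarrow> w \<in> lists D \<Longrightarrow> regular S (subst_word phi w)"
  by (induction w) (auto simp: reg_subst_def intro: regular.intros)

lemma conc_Nil_right[simp]: "conc A {[]} = A"
  by (simp add: conc_def)

lemma conc_Nil_left[simp]: "conc {[]} A = A"
  by (simp add: conc_def)

lemma finite_rational:
  assumes F: "finite F" and reg: "\<And>L. L \<in> F \<Longrightarrow> regular S L"
  shows "rational_set S F"
proof -
  obtain h where h: "bij_betw h {0..<card F} F" using ex_bij_betw_nat_finite[OF F] by blast
  define n where "n = card F"
  define D :: "nat set" where "D = insert 0 {0..<n}"
  define K where "K = (\<lambda>i. [i]) ` {0..<n}"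
  define phi where "phi i = (if i < n then h i else {})" for i
  have "alphabet D" by (simp add: D_def alphabet_def)
  moreover have "K \<subseteq> plus_words D" by (auto simp: K_def D_def plus_words_def)
  moreover have "regular D K"
  proof -
    have "K = \<Union> ((\<lambda>i. {[i]}) ` {0..<n})" unfolding K_def by blast
    also have "regular D \<dots>" by (intro regular_Union) (auto simp: D_def intro: regular.intros)
    finally show ?thesis .
  qed
  moreover have "reg_subst D S phi"
    unfolding reg_subst_def
  proof
    fix d assume "d \<in> D"
    show "regular S (phi d)"
    proof (cases "d < n")
      case True
      then have "h d \<in> F" using h unfolding n_def by (auto dest: bij_betwE)
      then show ?thesis using True reg by (simp add: phi_def)
    next
      case False then show ?thesis by (simp add: phi_def regular.intros)
    qed
  qed
  moreover have "F = rat_of K phi"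
  proof -
    have "rat_of K phi = h ` {0..<n}" unfolding rat_of_def K_def phi_def
      by (auto simp: image_image)
    then show ?thesis using h by (simp add: bij_betw_def n_def)
  qed
  ultimately show ?thesis unfolding rational_set_def by blast
qed

lemma part2:
  fixes S :: "'a set"
  assumes S: "alphabet S" and rat: "rational_set S RR" and fin: "finite RR" and R: "regular S R"
  shows "rational_set S (dminus RR R) \<and> finite (dminus RR R)"
proof
  show f: "finite (dminus RR R)" using fin by (simp add: dminus_def)
  obtain D :: "nat set" and K phi where D: "alphabet D" "K \<subseteq> plus_words D" "regular D K"
     "reg_subst D S phi" "RR = rat_of K phi"
    using rat unfolding rational_set_def by blast
  have "regular S L" if "L \<in> RR" for L
    using that D subst_word_regular[OF D(4)] by (auto simp: rat_of_def plus_words_def)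
  then have "regular S L" if "L \<in> dminus RR R" for L
    using that regular_diff[OF _ _ R] S by (auto simp: dminus_def alphabet_def)
  then show "rational_set S (dminus RR R)" using finite_rational[OF f] by blast
qed

lemma subst_word_nonempty: "replicate (length w) 0 \<in> subst_word (\<lambda>_. {[0::nat]}) w"
  by (induction w) (auto simp: conc_def)

lemma part3:
  "\<exists>(S::nat set). alphabet S \<and>
            (\<exists>(D::nat set) (phi :: nat \<Rightarrow> nat list set) K R.
               alphabet D \<and> reg_subst D S phi \<and> K \<subseteq> plus_words D \<and> regular D K
               \<and> finite (rat_of K phi) \<and> regular S R
               \<and> \<not> (\<exists>K'. K' \<subseteq> plus_words D \<and> regular D K'
                       \<and> dminus (rat_of K phi) R = rat_of K' phi))"
proof (intro exI conjI)
  let ?phi = "\<lambda>_::nat. {[0::nat]}"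
  show "alphabet {0::nat}" by (simp add: alphabet_def)
  show "alphabet {0::nat}" by (simp add: alphabet_def)
  show "reg_subst {0::nat} {0} ?phi" by (simp add: reg_subst_def regular.intros)
  show "{[0::nat]} \<subseteq> plus_words {0}" by (simp add: plus_words_def)
  show "regular {0::nat} {[0]}" by (simp add: regular.intros)
  show "finite (rat_of {[0::nat]} ?phi)" by (simp add: rat_of_def)
  show "regular {0::nat} {[0]}" by (simp add: regular.intros)
  show "\<not> (\<exists>K'. K' \<subseteq> plus_words {0} \<and> regular {0} K' \<and> dminus (rat_of {[0]} ?phi) {[0]} = rat_of K' ?phi)"
  proof
    assume "\<exists>K'. K' \<subseteq> plus_words {0} \<and> regular {0} K' \<and> dminus (rat_of {[0]} ?phi) {[0]} = rat_of K' ?phi"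
    then obtain K' where eq: "dminus (rat_of {[0]} ?phi) {[0]} = rat_of K' ?phi" by blast
    have "dminus (rat_of {[0]} ?phi) {[0]} = {{}}" by (simp add: dminus_def rat_of_def)
    then have "{} \<in> subst_word ?phi ` K'" using eq unfolding rat_of_def by (metis insertI1)
    then show False using subst_word_nonempty by (metis empty_iff imageE)
  qed
qed


lemma conc_pair:
  assumes eq: "conc A B = {x, y}" and lx: "length x = n" and ly: "length y = n" and n: "0 < n"
    and hd: "hd x \<noteq> hd y" and last: "last x \<noteq> last y"
  shows "A = {x, y} \<or> B = {x, y}"
proof -
  have mem: "u @ v \<in> {x, y}" if "u \<in> A" "v \<in> B" for u v
    using eq that unfolding conc_def by blast
  have len: "length u + length v = n" if "u \<in> A" "v \<in> B" for u v
    using mem[OF that] lx ly by auto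
  have xc: "x \<in> conc A B" "y \<in> conc A B" using eq by auto
  show ?thesis
  proof (cases "[] \<in> A")
    case True
    have "A = {[]}"
    proof -
      have "u = []" if "u \<in> A" for u
      proof -
        obtain v where "v \<in> B" using xc unfolding conc_def by blast
        with len[OF True] len[OF that] show ?thesis by simp
      qed
      then show ?thesis using True by blast
    qed
    then show ?thesis using eq by simp
  next
    case nA: False
    show ?thesis
    proof (cases "[] \<in> B")
      case True
      have "B = {[]}"
      proof -
        have "v = []" if "v \<in> B" for v
        proof -
          obtain u where "u \<in> A" using xc unfolding conc_def by blast
          with len[OF _ True] len[OF _ that] show ?thesis by simp
        qed
        then show ?thesis using True by blast
      qed
      then show ?thesis using eq by simp
    next
      case nB: False
      obtain u1 v1 where 1: "x = u1 @ v1" "u1 \<in> A" "v1 \<in> B" using xc unfolding conc_def by blast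
      obtain u2 v2 where 2: "y = u2 @ v2" "u2 \<in> A" "v2 \<in> B" using xc unfolding conc_def by blast
      have ne: "u1 \<noteq> []" "u2 \<noteq> []" "v1 \<noteq> []" "v2 \<noteq> []" using 1 2 nA nB by auto
      have l: "length u1 = length u2" "length v1 = length v2"
        using len[OF 1(2) 1(3)] len[OF 1(2) 2(3)] len[OF 2(2) 2(3)] by auto
      have "u1 @ v2 = x \<or> u1 @ v2 = y" using mem[OF 1(2) 2(3)] by simp
      then show ?thesis
      proof
        assume "u1 @ v2 = x"
        then have "v1 = v2" using 1 by simp
        then have "last x = last y" using 1 2 ne by simp
        then show ?thesis using last by simp
      next
        assume "u1 @ v2 = y"
        then have "u1 = u2" using 2 l by simp
        then have "hd x = hd y" using 1 2 ne by simp
        then show ?thesis using hd by simp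
      qed
    qed
  qed
qed

lemma subst_pair:
  assumes "subst_word phi w = {x, y}" "length x = n" "length y = n" "0 < n"
    "hd x \<noteq> hd y" "last x \<noteq> last y"
  shows "\<exists>d\<in>set w. phi d = {x, y}"
  using assms(1)
proof (induction w)
  case Nil then show ?case using assms(2-4) by (auto simp: doubleton_eq_iff)
next
  case (Cons d w)
  then have "conc (phi d) (subst_word phi w) = {x, y}" by simp
  from conc_pair[OF this assms(2-6)] Cons.IH show ?case by auto
qed

definition S1 :: "nat set" where "S1 = {0, 1}"

definition RR1 :: "nat list set" where "RR1 = {w \<in> lists S1. 0 \<in> set w \<and> 1 \<in> set w}"

lemma subst_word_01: "subst_word (\<lambda>_. {[0],[1]}) w = {v. length v = length w \<and> set v \<subseteq> S1}"
proof (induction w)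
  case Nil then show ?case by auto
next
  case (Cons d w)
  show ?case
  proof (intro equalityI subsetI)
    fix v :: "nat list" assume "v \<in> subst_word (\<lambda>_. {[0],[1]}) (d # w)"
    then obtain u v' where uv: "v = u @ v'" "u \<in> {[0],[1]}" "v' \<in> subst_word (\<lambda>_. {[0],[1]}) w"
      by (auto simp: conc_def)
    have "length v' = length w" "set v' \<subseteq> S1" using uv(3) Cons.IH by auto
    moreover have "length u = 1" "set u \<subseteq> S1" using uv(2) by (auto simp: S1_def)
    ultimately show "v \<in> {v. length v = length (d # w) \<and> set v \<subseteq> S1}" using uv(1) by simp
  next
    fix v :: "nat list" assume v: "v \<in> {v. length v = length (d # w) \<and> set v \<subseteq> S1}"
    then obtain c v' where cv: "v = c # v'" by (cases v) auto
    have "v' \<in> subst_word (\<lambda>_. {[0],[1]}) w" using v cv Cons.IH by auto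
    moreover have "[c] \<in> {[0],[1]}" using v cv by (auto simp: S1_def)
    moreover have "v = [c] @ v'" using cv by simp
    ultimately show "v \<in> subst_word (\<lambda>_. {[0],[1]}) (d # w)"
      unfolding subst_word.simps conc_def by blast
  qed
qed

lemma diff_01: "0 < n \<Longrightarrow> {v. length v = n \<and> set v \<subseteq> S1} - RR1 = {replicate n 0, replicate n 1}"
proof (intro equalityI subsetI)
  fix v assume v: "v \<in> {v. length v = n \<and> set v \<subseteq> S1} - RR1"
  then have "set v \<subseteq> {0} \<or> set v \<subseteq> {1}" by (auto simp: RR1_def S1_def)
  then show "v \<in> {replicate n 0, replicate n 1}"
  proof
    assume "set v \<subseteq> {0}"
    then have "\<forall>y\<in>set v. y = 0" by auto
    then have "replicate (length v) 0 = v" by (rule replicate_length_same)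
    then show ?thesis using v by auto
  next
    assume "set v \<subseteq> {1}"
    then have "\<forall>y\<in>set v. y = 1" by auto
    then have "replicate (length v) 1 = v" by (rule replicate_length_same)
    then show ?thesis using v by auto
  qed
next
  fix v assume "0 < n" "v \<in> {replicate n (0::nat), replicate n 1}"
  then show "v \<in> {v. length v = n \<and> set v \<subseteq> S1} - RR1"
    by (auto simp: RR1_def S1_def)
qed

lemma regular_RR1: "regular S1 RR1"
proof (rule finite_derivs_regular)
  show "finite S1" by (simp add: S1_def)
  show "RR1 \<subseteq> lists S1" by (auto simp: RR1_def)
  define F where "F = (\<lambda>(p,q). {v \<in> lists S1. (p \<or> 0 \<in> set v) \<and> (q \<or> 1 \<in> set v)})"
  have "deriv u RR1 = (if u \<in> lists S1 then F (0 \<in> set u, 1 \<in> set u) else {})" for u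
    by (auto simp: deriv_def RR1_def F_def)
  then have "range (\<lambda>u. deriv u RR1) \<subseteq> insert {} (F ` UNIV)" by auto
  then show "finite (range (\<lambda>u. deriv u RR1))" by (rule finite_subset) simp
qed

lemma regular_plus0: "regular {0::nat} (plus_words {0})"
proof (rule finite_derivs_regular)
  show "finite {0::nat}" by simp
  show "plus_words {0::nat} \<subseteq> lists {0}" by (auto simp: plus_words_def)
  have "deriv u (plus_words {0::nat}) = (if u \<in> lists {0} then (if u = [] then plus_words {0} else lists {0}) else {})" for u
    by (auto simp: deriv_def plus_words_def)
  then have "range (\<lambda>u. deriv u (plus_words {0::nat})) \<subseteq> {plus_words {0}, lists {0}, {}}" by auto
  then show "finite (range (\<lambda>u. deriv u (plus_words {0::nat})))" by (rule finite_subset) simp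
qed

lemma part1:
  "\<exists>(S::nat set). alphabet S \<and>
            (\<exists>\<R> R. rational_set S \<R> \<and> regular S R \<and> \<not> rational_set S (dminus \<R> R))"
proof (intro exI conjI)
  let ?phi = "\<lambda>_::nat. {[0::nat],[1]}"
  let ?K = "plus_words {0::nat}"
  show "alphabet S1" by (simp add: alphabet_def S1_def)
  show "rational_set S1 (rat_of ?K ?phi)"
    unfolding rational_set_def
  proof (intro exI conjI)
    show "alphabet {0::nat}" by (simp add: alphabet_def)
    show "?K \<subseteq> plus_words {0}" by simp
    show "regular {0} ?K" by (rule regular_plus0)
    have "regular S1 ({[0]} \<union> {[1]})" by (intro regular.intros) (auto simp: S1_def)
    then show "reg_subst {0} S1 ?phi" by (simp add: reg_subst_def insert_commute)
  qed simp
  show "regular S1 RR1" by (rule regular_RR1)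
  show "\<not> rational_set S1 (dminus (rat_of ?K ?phi) RR1)"
  proof
    let ?T = "dminus (rat_of ?K ?phi) RR1"
    assume "rational_set S1 ?T"
    then obtain D :: "nat set" and K psi where D: "alphabet D" "K \<subseteq> plus_words D" "?T = rat_of K psi"
      unfolding rational_set_def by blast
    let ?f = "\<lambda>n::nat. {replicate n (0::nat), replicate n 1}"
    have inT: "?f n \<in> ?T" if "0 < n" for n
    proof -
      have "replicate n 0 \<in> ?K" using that by (auto simp: plus_words_def)
      then have "subst_word ?phi (replicate n 0) \<in> rat_of ?K ?phi" unfolding rat_of_def by (rule imageI)
      then have "subst_word ?phi (replicate n 0) - RR1 \<in> ?T" unfolding dminus_def by (rule imageI)
      moreover have "subst_word ?phi (replicate n 0) - RR1 = ?f n"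
        using diff_01[OF that] subst_word_01[of "replicate n (0::nat)"] by simp
      ultimately show ?thesis by simp
    qed
    have "?f n \<in> psi ` D" if n0: "0 < n" for n
    proof -
      obtain w where w: "w \<in> K" "subst_word psi w = ?f n"
        using inT[OF n0] D(3) by (auto simp: rat_of_def)
      have "\<exists>d\<in>set w. psi d = ?f n"
        by (rule subst_pair[OF w(2), of n]) (use n0 in \<open>auto simp: hd_replicate last_replicate\<close>)
      moreover have "set w \<subseteq> D" using w D(2) by (auto simp: plus_words_def)
      ultimately show ?thesis by (metis image_eqI subsetD)
    qed
    then have sub: "range (\<lambda>n. ?f (Suc n)) \<subseteq> psi ` D"
      by (intro subsetI) (metis (no_types, lifting) rangeE zero_less_Suc)
    have fin: "finite (psi ` D)" using D(1) by (simp add: alphabet_def)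
    have "finite (range (\<lambda>n. ?f (Suc n)))" by (rule finite_subset[OF sub fin])
    moreover have "inj (\<lambda>n. ?f (Suc n))"
    proof (rule injI)
      fix m n assume "?f (Suc m) = ?f (Suc n)"
      then have "replicate (Suc m) (0::nat) \<in> ?f (Suc n)" by blast
      then have "length (replicate (Suc m) (0::nat)) = Suc n" by auto
      then show "m = n" by simp
    qed
    ultimately have "finite (UNIV :: nat set)" by (rule finite_imageD)
    then show False by simp
  qed
qed

theorem proposition10:
  shows "(\<exists>(S::nat set). alphabet S \<and>
            (\<exists>\<R> R. rational_set S \<R> \<and> regular S R \<and> \<not> rational_set S (dminus \<R> R)))
    \<and> (\<forall>(S::'a set) \<R> R. alphabet S \<longrightarrow> rational_set S \<R> \<longrightarrow> finite \<R> \<longrightarrow> regular S R \<longrightarrow>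
            rational_set S (dminus \<R> R) \<and> finite (dminus \<R> R))
    \<and> (\<exists>(S::nat set). alphabet S \<and>
            (\<exists>(D::nat set) (phi :: nat \<Rightarrow> nat list set) K R.
               alphabet D \<and> reg_subst D S phi \<and> K \<subseteq> plus_words D \<and> regular D K
               \<and> finite (rat_of K phi) \<and> regular S R
               \<and> \<not> (\<exists>K'. K' \<subseteq> plus_words D \<and> regular D K'
                       \<and> dminus (rat_of K phi) R = rat_of K' phi)))"
proof (intro conjI allI impI)
  show "\<exists>(S::nat set). alphabet S \<and>
            (\<exists>\<R> R. rational_set S \<R> \<and> regular S R \<and> \<not> rational_set S (dminus \<R> R))"
    by (rule part1)
next
  fix S :: "'a set" and RR R
  assume "alphabet S" "rational_set S RR" "finite RR" "regular S R"
  from part2[OF this] show "rational_set S (dminus RR R)" "finite (dminus RR R)" by auto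
qed (rule part3)

end
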